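(* Let $A<\mathbb{R}$ be any subring and let $p\in\mathbb{P}^1\setminus\{\infty\}$. Then $\mathrm{PSL}_2(A)\cdot p\subseteq\{\infty\}\cup H(A)\cdot p$. Consequently, the orbit equivalence relations induced by the actions of $\mathrm{PSL}_2(A)$ and of $H(A)$ on $\mathbb{P}^1$ coincide when restricted to $\mathbb{P}^1\setminus\{\infty\}$.
   Context: Let $\mathbb{P}^1=\mathbb{P}^1(\mathbb{R})$ with its usual topology (a circle) and the natural action of $\mathrm{PSL}_2(\mathbb{R})$. Let $G$ be the group of homeomorphisms of $\mathbb{P}^1$ which are piecewise in $\mathrm{PSL}_2(\mathbb{R})$ with finitely many pieces, each an interval. Let $\infty\in\mathbb{P}^1$ correspond to the first basis vector of $\mathbb{R}^2$ and $H<G$ its stabilizer. For a subring $A<\mathbb{R}$, $P_A$ is the set of fixed points of hyperbolic elements (trace of absolute value $>2$) of $\mathrm{PSL}_2(A)$, $G(A)$ is the subgroup of $G$ of elements piecewise in $\mathrm{PSL}_2(A)$ with all interval endpoints in $P_A$, and $H(A)=G(A)\cap H$. *)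

theory Defs
  imports Complex_Main
begin

text \<open>The real projective line: affine coordinate x corresponds to [x:1];
  Inf corresponds to [1:0], the first basis vector.\<close>
datatype P1 = Inf | Fin real

definition real_subring :: "real set \<Rightarrow> bool" where
  "real_subring A \<longleftrightarrow> 0 \<in> A \<and> 1 \<in> A \<and>
     (\<forall>x\<in>A. \<forall>y\<in>A. x + y \<in> A \<and> x - y \<in> A \<and> x * y \<in> A)"

text \<open>A 2x2 matrix (a,b,c,d) = [[a,b],[c,d]].  SL2 A is the set of matrices
  with entries in A and determinant 1; its action on P1 factors through PSL2(A).\<close>
type_synonym mat2 = "real \<times> real \<times> real \<times> real"

definition SL2 :: "real set \<Rightarrow> mat2 set" where
  "SL2 A = {(a,b,c,d). a \<in> A \<and> b \<in> A \<and> c \<in> A \<and> d \<in> A \<and> a * d - b * c = 1}"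

fun mtrace :: "mat2 \<Rightarrow> real" where
  "mtrace (a,b,c,d) = a + d"

text \<open>Projective action: [x:y] maps to [ax+by : cx+dy].\<close>
fun mob :: "mat2 \<Rightarrow> P1 \<Rightarrow> P1" where
  "mob (a,b,c,d) Inf = (if c = 0 then Inf else Fin (a / c))"
| "mob (a,b,c,d) (Fin x) =
     (if c * x + d = 0 then Inf else Fin ((a * x + b) / (c * x + d)))"

text \<open>P_A: fixed points of hyperbolic elements of PSL2(A).\<close>
definition PA :: "real set \<Rightarrow> P1 set" where
  "PA A = {p. \<exists>M\<in>SL2 A. \<bar>mtrace M\<bar> > 2 \<and> mob M p = p}"

text \<open>Closed arc of the circle P1 from u to v, traversed in the direction of
  increasing affine coordinate (passing through Inf when wrapping around).\<close>
fun arc :: "P1 \<Rightarrow> P1 \<Rightarrow> P1 set" where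
  "arc (Fin a) (Fin b) =
     (if a \<le> b then Fin ` {a..b} else insert Inf (Fin ` ({a..} \<union> {..b})))"
| "arc (Fin a) Inf = insert Inf (Fin ` {a..})"
| "arc Inf (Fin b) = insert Inf (Fin ` {..b})"
| "arc Inf Inf = UNIV"

text \<open>G(A): bijections of P1 that are piecewise in PSL2(A) on finitely many closed
  arcs with endpoints in P_A (agreement on the closed arcs gives continuity, so these
  are exactly the homeomorphisms described in the paper); a single global piece is
  also allowed.\<close>
definition GA :: "real set \<Rightarrow> (P1 \<Rightarrow> P1) set" where
  "GA A = {g. bij g \<and>
     ((\<exists>M\<in>SL2 A. g = mob M) \<or>
      (\<exists>ps. 2 \<le> length ps \<and> distinct ps \<and> set ps \<subseteq> PA A \<and>
         (\<forall>i<length ps. \<exists>M\<in>SL2 A.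
            \<forall>x\<in>arc (ps ! i) (ps ! (Suc i mod length ps)). g x = mob M x)))}"

definition HA :: "real set \<Rightarrow> (P1 \<Rightarrow> P1) set" where
  "HA A = {g \<in> GA A. g Inf = Inf}"

end

theory Submission
  imports Defs
begin


lemma mob_inv:
  assumes det: "a*d - b*c = (1::real)"
  shows "mob (d,-b,-c,a) (mob (a,b,c,d) z) = z"
proof (cases z)
  case Inf
  then show ?thesis
  proof (cases "c = 0")
    case False
    have "-c*(a/c) + a = 0" using False by simp
    then show ?thesis using Inf False by simp
  qed simp
next
  case (Fin y)
  show ?thesis
  proof (cases "c*y+d = 0")
    case True
    then have c: "c \<noteq> 0" using det by (metis add_0 mult_zero_left mult_zero_right diff_zero zero_neq_one)
    have "y = d/(-c)" using True c by (simp add: field_simps)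
    then show ?thesis using Fin True c by simp
  next
    case False
    define w where "w = (a*y+b)/(c*y+d)"
    have e1: "-c*w + a = 1/(c*y+d)" using False det unfolding w_def
      by (simp add: field_simps)
    have e2: "d*w + -b = y/(c*y+d)" using False det unfolding w_def
      by (simp add: field_simps) (metis mult.assoc mult.commute distrib_right mult_1)
    have "mob (a,b,c,d) z = Fin w" using Fin False w_def by simp
    moreover have "mob (d,-b,-c,a) (Fin w) = Fin y"
      using e1 e2 False by simp
    ultimately show ?thesis using Fin by simp
  qed
qed

lemma SL2_bij: assumes "M \<in> SL2 A" shows "bij (mob M)"
proof -
  obtain a b c d where M: "M = (a,b,c,d)" and det: "a*d-b*c = 1" using assms
    by (auto simp: SL2_def)
  have det2: "d*a - (-b)*(-c) = 1" using det by (simp add: algebra_simps)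
  have "\<And>z. mob (d,-b,-c,a) (mob M z) = z" using mob_inv[OF det] M by simp
  moreover have "\<And>z. mob M (mob (d,-b,-c,a) z) = z" using mob_inv[OF det2] M by simp
  ultimately show ?thesis by (metis bij_betw_byWitness UNIV_I subsetI image_subset_iff)
qed

lemma key_step:
  fixes x :: real
  defines "key \<equiv> (\<lambda>u. case u of Inf \<Rightarrow> 0 | Fin a \<Rightarrow> 1/(x-a))"
  assumes "Fin x \<notin> arc u v"
  shows "key u \<le> key v"
proof (cases u)
  case Inf
  then show ?thesis
  proof (cases v)
    case Inf then show ?thesis using assms \<open>u = Inf\<close> by simp
  next
    case (Fin b)
    then have "b < x" using assms Inf by auto
    then show ?thesis using Inf Fin by (simp add: key_def)
  qed
next
  case (Fin a)
  show ?thesis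
  proof (cases v)
    case Inf
    then have "x < a" using assms Fin by auto
    then show ?thesis using Inf Fin by (simp add: key_def)
  next
    case Fin2: (Fin b)
    show ?thesis
    proof (cases "a \<le> b")
      case True
      then have "x < a \<or> b < x" using assms Fin Fin2 by auto
      then have "1/(x-a) \<le> 1/(x-b)"
      proof
        assume "x < a" then show ?thesis using True by (intro divide_left_mono) (auto intro: mult_neg_neg)
      next
        assume "b < x" then show ?thesis using True by (intro divide_left_mono) (auto intro: mult_pos_pos)
      qed
      then show ?thesis using Fin Fin2 by (simp add: key_def)
    next
      case False
      then have bx: "b < x" "x < a" using assms Fin Fin2 by auto
      then have "1/(x-a) < 0" "0 < 1/(x-b)" by simp_all
      then have "1/(x-a) \<le> 1/(x-b)" by linarith
      then show ?thesis using Fin Fin2 by (simp add: key_def)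
    qed
  qed
qed

lemma arc_self: "u \<in> arc u v"
  by (cases u; cases v) auto

lemma key_inj:
  fixes x :: real
  assumes "(case u of Inf \<Rightarrow> 0 | Fin a \<Rightarrow> 1/(x-a)) = (case v of Inf \<Rightarrow> 0 | Fin a \<Rightarrow> 1/(x-a))"
    "u \<noteq> Fin x" "v \<noteq> Fin x"
  shows "u = v"
proof (cases u)
  case Inf
  then show ?thesis using assms by (cases v) auto
next
  case (Fin a)
  then show ?thesis using assms by (cases v) (auto simp: divide_eq_eq)
qed

lemma cover:
  assumes "distinct ps" "2 \<le> length ps"
  shows "\<exists>i<length ps. Fin x \<in> arc (ps!i) (ps!(Suc i mod length ps))"
proof (rule ccontr)
  assume H: "\<not> ?thesis"
  define key where "key \<equiv> (\<lambda>u. case u of Inf \<Rightarrow> 0 | Fin a \<Rightarrow> 1/(x-a))"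
  define n where "n = length ps"
  define f where "f i = key (ps!i)" for i
  have step: "f i \<le> f (Suc i mod n)" if "i < n" for i
    using H that key_step[of x] unfolding f_def key_def n_def by blast
  have ne: "ps!i \<noteq> Fin x" if "i < n" for i
    using H that arc_self n_def by metis
  have chain: "f 1 \<le> f i" if "1 \<le> i" "i < n" for i
    using that
  proof (induction i)
    case 0 then show ?case by simp
  next
    case (Suc i)
    show ?case
    proof (cases "i = 0")
      case True then show ?thesis by simp
    next
      case False
      then have "f 1 \<le> f i" using Suc by simp
      moreover have "f i \<le> f (Suc i)" using step[of i] Suc by simp
      ultimately show ?thesis by simp
    qed
  qed
  have n2: "2 \<le> n" using assms n_def by simp
  have "f 1 \<le> f (n-1)" using chain n2 by simp
  also have "f (n-1) \<le> f 0" using step[of "n-1"] n2 by simp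
  also have "f 0 \<le> f 1" using step[of 0] n2 by simp
  finally have eq: "f 0 = f 1" using step[of 0] n2 by simp
  have "ps!0 \<noteq> ps!1"
  proof
    assume "ps!0 = ps!1"
    moreover have "0 < length ps" "1 < length ps" using n2 n_def by auto
    ultimately have "(0::nat) = 1" using nth_eq_iff_index_eq[of ps 0 1] assms(1) by blast
    then show False by simp
  qed
  moreover have "ps!0 = ps!1"
    using key_inj[of x "ps!0" "ps!1"] eq ne[of 0] ne[of 1] n2 unfolding f_def key_def by simp
  ultimately show False by simp
qed



lemma subring_int: assumes "real_subring A" shows "real_of_int k \<in> A"
proof -
  have c0: "0 \<in> A" and c1: "1 \<in> A" and cadd: "\<And>x y. x \<in> A \<Longrightarrow> y \<in> A \<Longrightarrow> x + y \<in> A"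
    and csub: "\<And>x y. x \<in> A \<Longrightarrow> y \<in> A \<Longrightarrow> x - y \<in> A"
    using assms unfolding real_subring_def by auto
  have nat: "real n \<in> A" for n :: nat
  proof (induction n)
    case 0 then show ?case using c0 by simp
  next
    case (Suc n)
    have "real n + 1 \<in> A" using cadd[OF Suc c1] .
    moreover have "real (Suc n) = real n + 1" by simp
    ultimately show ?case by (simp only:)
  qed
  show ?thesis
  proof (cases "k \<ge> 0")
    case True
    then have "real_of_int k = real (nat k)" by (simp only: of_nat_nat)
    then show ?thesis using nat[of "nat k"] by (simp only:)
  next
    case False
    then have "real (nat (-k)) = real_of_int (-k)" by (simp only: of_nat_nat)
    then have "real_of_int k = 0 - real (nat (-k))" by simp
    then show ?thesis using csub[OF c0 nat[of "nat (-k)"]] by (simp only:)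
  qed
qed

lemma exists_int_neg:
  fixes K m :: real assumes "m \<noteq> 0" shows "\<exists>n::int. K + of_int n * m < 0"
proof -
  obtain k :: nat where k: "\<bar>K\<bar> / \<bar>m\<bar> < real k" using reals_Archimedean2 by blast
  then have km: "\<bar>K\<bar> < real k * \<bar>m\<bar>" using assms by (simp add: divide_less_eq)
  show ?thesis
  proof (cases "m > 0")
    case True
    then have "K + of_int (- int k) * m < 0" using km by simp
    then show ?thesis by blast
  next
    case False
    then have "m < 0" using assms by simp
    then have "K + of_int (int k) * m < 0" using km by simp
    then show ?thesis by blast
  qed
qed

lemma root_facts:
  fixes a b c d r n :: real
  assumes det: "a*d-b*c=1" and E: "(c*r+d)*(r+n) = a*r+b"
  shows "c*r+d \<noteq> 0" "mob (a,b,c,d) (Fin r) = Fin (r+n)"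
    "mob (d, d*n-b, -c, a-c*n) (Fin r) = Fin r"
proof -
  show nz: "c*r+d \<noteq> 0"
  proof
    assume h: "c*r+d = 0"
    then have "a*r+b = 0" using E by simp
    then have "a*(c*r) + b*c = 0" by (metis distrib_right mult.assoc mult.commute mult_zero_left)
    moreover have "c*r = -d" using h by linarith
    ultimately have "a*(-d) + b*c = 0" by simp
    then show False using det by simp
  qed
  show "mob (a,b,c,d) (Fin r) = Fin (r+n)" using nz E by (simp add: field_simps)
  have nz2: "-c*r + (a-c*n) \<noteq> 0"
  proof
    assume h: "-c*r + (a-c*n) = 0"
    then have ha: "a = c*(r+n)" by (simp add: algebra_simps)
    then have "d*(r+n) = b" using E by (simp add: algebra_simps)
    then have "a*d - b*c = c*(r+n)*d - d*(r+n)*c" using ha by simp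
    also have "\<dots> = 0" by simp
    finally have "a*d - b*c = 0" .
    then show False using det by simp
  qed
  have "d*r + (d*n-b) = r * (-c*r + (a-c*n))" using E by (simp add: algebra_simps)
  then show "mob (d, d*n-b, -c, a-c*n) (Fin r) = Fin r" using nz2 by simp
qed

lemma lin_sign:
  fixes c d u v :: real
  assumes "u \<le> v" "\<forall>z\<in>{u..v}. c*z+d \<noteq> 0"
  shows "(c*u+d)*(c*v+d) > 0"
proof (rule ccontr)
  assume h: "\<not> ?thesis"
  have nu: "c*u+d \<noteq> 0" "c*v+d \<noteq> 0" using assms by auto
  show False
  proof (cases "c = 0")
    case True then show False using h nu by simp
  next
    case False
    define z where "z = -d/c"
    have cz: "c*z+d = 0" using False by (simp add: z_def)
    have "u \<le> z \<and> z \<le> v"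
    proof (cases "c > 0")
      case True
      have m: "c*u \<le> c*v" using assms(1) True by simp
      have a1: "\<not> (c*u+d > 0)"
      proof
        assume "c*u+d > 0"
        then have "c*v+d > 0" using m by linarith
        then show False using h \<open>c*u+d > 0\<close> mult_pos_pos by blast
      qed
      then have a2: "c*u+d < 0" using nu by linarith
      have "\<not> (c*v+d < 0)"
      proof
        assume "c*v+d < 0"
        then show False using h a2 mult_neg_neg by blast
      qed
      then have "c*u < c*z \<and> c*z < c*v" using cz a2 nu by linarith
      then show ?thesis using True by simp
    next
      case False2: False
      then have cn: "c < 0" using False by simp
      have m: "c*v \<le> c*u" using assms(1) cn by (simp add: mult_left_mono_neg)
      have a1: "\<not> (c*v+d > 0)"
      proof
        assume "c*v+d > 0"
        then have "c*u+d > 0" using m by linarith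
        then show False using h \<open>c*v+d > 0\<close> mult_pos_pos by blast
      qed
      then have a2: "c*v+d < 0" using nu by linarith
      have "\<not> (c*u+d < 0)"
      proof
        assume "c*u+d < 0"
        then show False using h a2 mult_neg_neg by blast
      qed
      then have "c*z < c*u \<and> c*v < c*z" using cz a2 nu by linarith
      then show ?thesis using cn by (simp add: mult_less_cancel_left)
    qed
    then show False using assms cz by auto
  qed
qed

lemma mob_mono:
  fixes a b c d u v :: real
  assumes det: "a*d-b*c=1" and uv: "u \<le> v" and p: "(c*u+d)*(c*v+d) > 0"
  shows "(a*u+b)/(c*u+d) \<le> (a*v+b)/(c*v+d)"
proof -
  have nz: "c*u+d \<noteq> 0" "c*v+d \<noteq> 0" using p by auto
  have num: "(a*v+b)*(c*u+d) - (c*v+d)*(a*u+b) = (a*d-b*c)*(v-u)" by (simp add: algebra_simps)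
  have "(a*v+b)/(c*v+d) - (a*u+b)/(c*u+d) = ((a*v+b)*(c*u+d) - (c*v+d)*(a*u+b))/((c*v+d)*(c*u+d))"
    using nz by (simp add: diff_frac_eq)
  also have "\<dots> = (v-u)/((c*u+d)*(c*v+d))" using num det by (simp add: mult.commute)
  finally have e: "(a*v+b)/(c*v+d) - (a*u+b)/(c*u+d) = (v-u)/((c*u+d)*(c*v+d))" .
  have "(v-u)/((c*u+d)*(c*v+d)) \<ge> 0" using uv p by simp
  then show ?thesis using e by linarith
qed

lemma main:
  assumes A: "real_subring A" and M: "(a,b,c,d) \<in> SL2 A" and c: "c \<noteq> 0" and den: "c*x+d \<noteq> 0"
  shows "\<exists>g\<in>HA A. g (Fin x) = mob (a,b,c,d) (Fin x)"
proof -
  have inA: "a \<in> A" "b \<in> A" "c \<in> A" "d \<in> A" and det: "a*d-b*c = 1" using M by (auto simp: SL2_def)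
  have c0: "0 \<in> A" and c1: "1 \<in> A" and cadd: "\<And>x y. x \<in> A \<Longrightarrow> y \<in> A \<Longrightarrow> x + y \<in> A"
    and csub: "\<And>x y. x \<in> A \<Longrightarrow> y \<in> A \<Longrightarrow> x - y \<in> A"
    and cmul: "\<And>x y. x \<in> A \<Longrightarrow> y \<in> A \<Longrightarrow> x * y \<in> A"
    using A unfolding real_subring_def by auto
  define m where "m = c*(c*x+d)"
  define K where "K = c*((c*x+d)*x - (a*x+b))"
  have "m \<noteq> 0" using c den by (simp add: m_def)
  then obtain ni :: int where ni: "K + of_int ni * m < 0" using exists_int_neg by blast
  define n where "n = real_of_int ni"
  have nA: "n \<in> A" using subring_int[OF A] n_def by simp
  have Qx: "c*((c*x+d)*(x+n) - (a*x+b)) < 0"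
  proof -
    have "c*((c*x+d)*(x+n) - (a*x+b)) = K + n*m" by (simp add: K_def m_def algebra_simps)
    then show ?thesis using ni n_def by simp
  qed
  define P where "P = (c*n+d-a)/c"
  define R where "R = (n*d-b)/c"
  have Qform: "c*((c*y+d)*(y+n) - (a*y+b)) = c^2*(y^2+P*y+R)" for y
  proof -
    have "c^2*(y^2+P*y+R) = c^2*y^2 + c*(c*P)*y + c*(c*R)" by (simp add: algebra_simps power2_eq_square)
    also have "c*P = c*n+d-a" using c by (simp add: P_def)
    also have "c*R = n*d-b" using c by (simp add: R_def)
    finally show ?thesis by (simp add: algebra_simps power2_eq_square)
  qed
  have c2: "c^2 > 0" using c by simp
  have neg: "x^2+P*x+R < 0"
  proof -
    have "c^2*(x^2+P*x+R) < 0" using Qx Qform[of x] by simp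
    then show ?thesis using c2 by (simp add: mult_less_0_iff)
  qed
  define D where "D = P^2 - 4*R"
  have Dpos: "D > 0"
  proof -
    have "(2*x+P)^2 = 4*(x^2+P*x+R) + D" by (simp add: D_def algebra_simps power2_eq_square)
    moreover have "(2*x+P)^2 \<ge> 0" by simp
    moreover have "4*(x^2+P*x+R) < 0" using neg by simp
    ultimately show ?thesis by linarith
  qed
  define s where "s = (-P - sqrt D)/2"
  define t where "t = (-P + sqrt D)/2"
  have ss: "sqrt D * sqrt D = D" using Dpos by simp
  have sqp: "sqrt D > 0" using Dpos by simp
  have fac: "y^2+P*y+R = (y-s)*(y-t)" for y
  proof -
    have "(y-s)*(y-t) = y^2 + P*y + (P^2 - sqrt D * sqrt D)/4"
      by (simp add: s_def t_def field_simps power2_eq_square)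
    then show ?thesis using ss by (simp add: D_def)
  qed
  have st: "s < t" using sqp by (simp add: s_def t_def)
  have xst: "s < x" "x < t"
  proof -
    have "(x-s)*(x-t) < 0" using neg fac[of x] by simp
    then have "(0 < x-s \<and> x-t < 0) \<or> (x-s < 0 \<and> 0 < x-t)" by (simp add: mult_less_0_iff)
    then show "s < x" "x < t" using st by auto
  qed
  have root: "(c*r+d)*(r+n) = a*r+b" if "r = s \<or> r = t" for r
  proof -
    have "c*((c*r+d)*(r+n) - (a*r+b)) = 0" using Qform[of r] fac[of r] that by auto
    then show ?thesis using c by simp
  qed
  have Qle: "c*((c*y+d)*(y+n) - (a*y+b)) \<le> 0" if "s \<le> y" "y \<le> t" for y
  proof -
    have "(y-s)*(y-t) \<le> 0" using that by (simp add: mult_le_0_iff)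
    then show ?thesis using Qform[of y] fac[of y] c2 by (simp add: mult_le_0_iff)
  qed
  have nzM: "\<forall>y\<in>{s..t}. c*y+d \<noteq> 0"
  proof
    fix y assume y: "y \<in> {s..t}"
    show "c*y+d \<noteq> 0"
    proof
      assume h: "c*y+d = 0"
      have "c*((c*y+d)*(y+n) - (a*y+b)) = -(a*(c*y) + b*c)" using h by (simp add: algebra_simps)
      also have "c*y = -d" using h by linarith
      then have "-(a*(c*y) + b*c) = a*d - b*c" by simp
      finally have "c*((c*y+d)*(y+n) - (a*y+b)) = 1" using det by simp
      then show False using Qle y by fastforce
    qed
  qed
  have nzMi: "\<forall>w\<in>{s+n..t+n}. -c*w+a \<noteq> 0"
  proof
    fix w assume w: "w \<in> {s+n..t+n}"
    show "-c*w+a \<noteq> 0"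
    proof
      assume h: "-c*w+a = 0"
      then have ha: "a = c*w" by linarith
      define y where "y = w - n"
      have "c*((c*y+d)*(y+n) - (a*y+b)) = c*((c*w-c*n+d)*w - (a*(w-n)+b))" by (simp add: y_def algebra_simps)
      also have "\<dots> = -c*n*a + d*a + a*c*n - b*c" using ha by (simp add: algebra_simps power2_eq_square)
      also have "\<dots> = a*d - b*c" by (simp add: algebra_simps)
      finally have "c*((c*y+d)*(y+n) - (a*y+b)) = 1" using det by simp
      moreover have "s \<le> y" "y \<le> t" using w by (auto simp: y_def)
      ultimately show False using Qle by fastforce
    qed
  qed
  have Mval: "(a*r+b)/(c*r+d) = r+n" if "r = s \<or> r = t" for r
    using root[OF that] root_facts(1)[OF det root[OF that]] by (simp add: field_simps)
  have det': "d*a - (-b)*(-c) = 1" using det by (simp add: algebra_simps)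
  have Mival: "(d*(r+n) + -b)/(-c*(r+n)+a) = r" if "r = s \<or> r = t" for r
  proof -
    have nz: "-c*(r+n)+a \<noteq> 0" using nzMi that st by auto
    have "d*(r+n) + -b = r*(-c*(r+n)+a)" using root[OF that] by (simp add: algebra_simps)
    then show ?thesis using nz by simp
  qed
  have MonI: "s+n \<le> (a*y+b)/(c*y+d) \<and> (a*y+b)/(c*y+d) \<le> t+n" if "s \<le> y" "y \<le> t" for y
  proof -
    have p1: "(c*s+d)*(c*y+d) > 0" by (rule lin_sign) (use that nzM in auto)
    have p2: "(c*y+d)*(c*t+d) > 0" by (rule lin_sign) (use that nzM in auto)
    have "(a*s+b)/(c*s+d) \<le> (a*y+b)/(c*y+d)" by (rule mob_mono[OF det that(1) p1])
    moreover have "(a*y+b)/(c*y+d) \<le> (a*t+b)/(c*t+d)" by (rule mob_mono[OF det that(2) p2])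
    ultimately show ?thesis using Mval[of s] Mval[of t] by simp
  qed
  have MionJ: "s \<le> (d*w + -b)/(-c*w+a) \<and> (d*w + -b)/(-c*w+a) \<le> t" if "s+n \<le> w" "w \<le> t+n" for w
  proof -
    have p1: "(-c*(s+n)+a)*(-c*w+a) > 0" by (rule lin_sign) (use that nzMi in auto)
    have p2: "(-c*w+a)*(-c*(t+n)+a) > 0" by (rule lin_sign) (use that nzMi in auto)
    have "(d*(s+n) + -b)/(-c*(s+n)+a) \<le> (d*w + -b)/(-c*w+a)" by (rule mob_mono[OF det' that(1) p1])
    moreover have "(d*w + -b)/(-c*w+a) \<le> (d*(t+n) + -b)/(-c*(t+n)+a)" by (rule mob_mono[OF det' that(2) p2])
    ultimately show ?thesis using Mival[of s] Mival[of t] by simp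
  qed
  define I where "I = Fin ` {s..t}"
  define J where "J = Fin ` {s+n..t+n}"
  define T where "T = (1::real, n, 0::real, 1::real)"
  define g where "g z = (if z \<in> I then mob (a,b,c,d) z else mob T z)" for z
  have mobT: "mob T (Fin y) = Fin (y+n)" "mob T Inf = Inf" for y by (simp_all add: T_def)
  have MI: "mob (a,b,c,d) z \<in> J" if zI: "z \<in> I" for z
  proof -
    obtain y where y: "z = Fin y" "s \<le> y" "y \<le> t" using zI by (auto simp: I_def)
    have "c*y+d \<noteq> 0" using nzM y by auto
    then show ?thesis using y MonI[of y] by (auto simp: J_def)
  qed
  have MiJ: "mob (d,-b,-c,a) w \<in> I" if wJ: "w \<in> J" for w
  proof -
    obtain v where v: "w = Fin v" "s+n \<le> v" "v \<le> t+n" using wJ by (auto simp: J_def)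
    have "-c*v+a \<noteq> 0" using nzMi v by auto
    then show ?thesis using v MionJ[of v] by (auto simp: I_def)
  qed
  have MiM: "mob (d,-b,-c,a) (mob (a,b,c,d) z) = z" for z using mob_inv[OF det] .
  have MMi: "mob (a,b,c,d) (mob (d,-b,-c,a) z) = z" for z using mob_inv[OF det'] by simp
  have TI: "mob T z \<notin> J" if "z \<notin> I" for z
  proof (cases z)
    case Inf then show ?thesis by (auto simp: mobT J_def)
  next
    case (Fin y)
    then have "\<not> (s \<le> y \<and> y \<le> t)" using that by (auto simp: I_def)
    then show ?thesis using Fin by (auto simp: mobT J_def)
  qed
  have inj: "inj g"
  proof (rule injI)
    fix z1 z2 assume e: "g z1 = g z2"
    show "z1 = z2"
    proof (cases "z1 \<in> I"; cases "z2 \<in> I")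
      assume "z1 \<in> I" "z2 \<in> I"
      then have "mob (a,b,c,d) z1 = mob (a,b,c,d) z2" using e by (simp add: g_def)
      then show ?thesis using MiM by metis
    next
      assume "z1 \<in> I" "z2 \<notin> I"
      then show ?thesis using e MI TI by (metis g_def)
    next
      assume "z1 \<notin> I" "z2 \<in> I"
      then show ?thesis using e MI TI by (metis g_def)
    next
      assume h: "z1 \<notin> I" "z2 \<notin> I"
      then have e2: "mob T z1 = mob T z2" using e by (simp add: g_def)
      show ?thesis
      proof (cases z1; cases z2)
        fix y1 y2 assume "z1 = Fin y1" "z2 = Fin y2" then show ?thesis using e2 by (simp add: mobT)
      next
        fix y1 assume "z1 = Fin y1" "z2 = Inf" then show ?thesis using e2 by (simp add: mobT)
      next
        fix y2 assume "z1 = Inf" "z2 = Fin y2" then show ?thesis using e2 by (simp add: mobT)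
      qed simp
    qed
  qed
  have surj: "surj g"
  proof (rule surjI)
    fix w
    show "g (if w \<in> J then mob (d,-b,-c,a) w else (case w of Inf \<Rightarrow> Inf | Fin v \<Rightarrow> Fin (v - n))) = w"
    proof (cases "w \<in> J")
      case True
      then show ?thesis using MiJ MMi by (simp add: g_def)
    next
      case False
      show ?thesis
      proof (cases w)
        case Inf
        have "Inf \<notin> I" by (auto simp: I_def)
        then show ?thesis using Inf False by (simp add: g_def mobT)
      next
        case (Fin v)
        then have "\<not> (s+n \<le> v \<and> v \<le> t+n)" using False by (auto simp: J_def)
        then have "Fin (v-n) \<notin> I" by (auto simp: I_def)
        then show ?thesis using Fin False by (simp add: g_def mobT)
      qed
    qed
  qed
  have bijg: "bij g" using inj surj by (simp add: bij_def)
  have TA: "T \<in> SL2 A" using c0 c1 nA by (simp add: T_def SL2_def)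
  have B_SL: "(d, d*n-b, -c, a-c*n) \<in> SL2 A"
  proof -
    have "d*n-b \<in> A" "-c \<in> A" "a-c*n \<in> A"
      using csub cmul inA nA c0 by (metis minus_diff_eq diff_zero)+
    moreover have "d*(a-c*n) - (d*n-b)*(-c) = 1" using det by (simp add: algebra_simps)
    ultimately show ?thesis using inA by (simp add: SL2_def)
  qed
  have trace: "\<bar>mtrace (d, d*n-b, -c, a-c*n)\<bar> > 2"
  proof -
    have "c^2*D = (c*P)^2 - 4*c*(c*R)" by (simp add: D_def algebra_simps power2_eq_square)
    also have "c*P = c*n+d-a" using c by (simp add: P_def)
    also have "c*R = n*d-b" using c by (simp add: R_def)
    finally have "c^2*D = (d + (a-c*n))^2 - 4*(a*d-b*c)" by (simp add: algebra_simps power2_eq_square)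
    then have e: "(d + (a-c*n))^2 = 4 + c^2*D" using det by simp
    have "c^2*D > 0" using c2 Dpos by simp
    then have gt: "(d + (a-c*n))^2 > 2^2" using e by simp
    show ?thesis
    proof (rule ccontr)
      assume "\<not> ?thesis"
      then have "\<bar>d + (a-c*n)\<bar> \<le> 2" by simp
      then have "\<bar>d + (a-c*n)\<bar>^2 \<le> 2^2" by (rule power_mono) simp
      then show False using gt by simp
    qed
  qed
  have PA: "Fin r \<in> PA A" if "r = s \<or> r = t" for r
    using B_SL trace root_facts(3)[OF det root[OF that]] unfolding PA_def by blast
  have pieces: "\<forall>i<length [Fin s, Fin t]. \<exists>M\<in>SL2 A.
            \<forall>z\<in>arc ([Fin s, Fin t] ! i) ([Fin s, Fin t] ! (Suc i mod length [Fin s, Fin t])). g z = mob M z"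
  proof (intro allI impI)
    fix i assume i: "i < length [Fin s, Fin t]"
    then have "i = 0 \<or> i = 1" by auto
    then show "\<exists>M\<in>SL2 A. \<forall>z\<in>arc ([Fin s, Fin t] ! i) ([Fin s, Fin t] ! (Suc i mod length [Fin s, Fin t])). g z = mob M z"
    proof
      assume "i = 0"
      then have "arc ([Fin s, Fin t] ! i) ([Fin s, Fin t] ! (Suc i mod length [Fin s, Fin t])) = I"
        using st by (simp add: I_def)
      then show ?thesis using M by (auto simp: g_def)
    next
      assume "i = 1"
      then have ar: "arc ([Fin s, Fin t] ! i) ([Fin s, Fin t] ! (Suc i mod length [Fin s, Fin t]))
          = insert Inf (Fin ` ({t..} \<union> {..s}))" using st by simp
      have "\<forall>z\<in>insert Inf (Fin ` ({t..} \<union> {..s})). g z = mob T z"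
      proof
        fix z assume z: "z \<in> insert Inf (Fin ` ({t..} \<union> {..s}))"
        show "g z = mob T z"
        proof (cases "z \<in> I")
          case False then show ?thesis by (simp add: g_def)
        next
          case True
          then have "z = Fin s \<or> z = Fin t" using z st by (auto simp: I_def)
          then obtain r where r: "r = s \<or> r = t" "z = Fin r" by blast
          have "c*r+d \<noteq> 0" using root_facts(1)[OF det root[OF r(1)]] .
          then have "mob (a,b,c,d) z = Fin (r+n)" using r Mval[OF r(1)] by simp
          then show ?thesis using True r by (simp add: g_def mobT)
        qed
      qed
      then show ?thesis using ar TA by auto
    qed
  qed
  have "g \<in> GA A"
    unfolding GA_def using bijg st PA pieces by (intro CollectI conjI disjI2 exI[of _ "[Fin s, Fin t]"]) auto
  moreover have "g Inf = Inf"
  proof -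
    have "Inf \<notin> I" by (auto simp: I_def)
    then show ?thesis by (simp add: g_def mobT)
  qed
  moreover have "g (Fin x) = mob (a,b,c,d) (Fin x)"
    using xst by (simp add: g_def I_def)
  ultimately show ?thesis unfolding HA_def by blast
qed


lemma main2:
  assumes A: "real_subring A" and M: "M \<in> SL2 A" and ne: "mob M (Fin x) \<noteq> Inf"
  shows "\<exists>g\<in>HA A. g (Fin x) = mob M (Fin x)"
proof -
  obtain a b c d where Md: "M = (a,b,c,d)" by (cases M) auto
  show ?thesis
  proof (cases "c = 0")
    case True
    have "mob M \<in> GA A" using SL2_bij[OF M] M unfolding GA_def by blast
    moreover have "mob M Inf = Inf" using True Md by simp
    ultimately show ?thesis unfolding HA_def by blast
  next
    case False
    have "c*x+d \<noteq> 0" using ne Md by auto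
    then show ?thesis using main[OF A _ False] M Md by simp
  qed
qed

theorem proposition6:
  fixes A :: "real set" and p :: P1
  assumes "real_subring A" and "p \<noteq> Inf"
  shows "{mob M p | M. M \<in> SL2 A} \<subseteq> insert Inf {g p | g. g \<in> HA A}
     \<and> (\<forall>q. q \<noteq> Inf \<longrightarrow> ((\<exists>M\<in>SL2 A. mob M p = q) \<longleftrightarrow> (\<exists>g\<in>HA A. g p = q)))"
proof -
  obtain x where p: "p = Fin x" using assms(2) by (cases p) auto
  have part1: "{mob M p | M. M \<in> SL2 A} \<subseteq> insert Inf {g p | g. g \<in> HA A}"
  proof
    fix w assume "w \<in> {mob M p | M. M \<in> SL2 A}"
    then obtain M where M: "M \<in> SL2 A" "w = mob M p" by blast
    show "w \<in> insert Inf {g p | g. g \<in> HA A}"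
    proof (cases "w = Inf")
      case False
      then obtain g where "g \<in> HA A" "g p = mob M p" using main2[OF assms(1) M(1), of x] M p by auto
      then show ?thesis using M by auto
    qed simp
  qed
  have part2: "(\<exists>M\<in>SL2 A. mob M p = q) \<longleftrightarrow> (\<exists>g\<in>HA A. g p = q)" if q: "q \<noteq> Inf" for q
  proof
    assume "\<exists>M\<in>SL2 A. mob M p = q"
    then obtain M where M: "M \<in> SL2 A" "mob M p = q" by blast
    then show "\<exists>g\<in>HA A. g p = q" using main2[OF assms(1) M(1), of x] p q by auto
  next
    assume "\<exists>g\<in>HA A. g p = q"
    then obtain g where g: "g \<in> HA A" "g p = q" by blast
    then have "g \<in> GA A" by (simp add: HA_def)
    then have "(\<exists>M\<in>SL2 A. g = mob M) \<or>
      (\<exists>ps. 2 \<le> length ps \<and> distinct ps \<and> set ps \<subseteq> PA A \<and>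
         (\<forall>i<length ps. \<exists>M\<in>SL2 A.
            \<forall>x\<in>arc (ps ! i) (ps ! (Suc i mod length ps)). g x = mob M x))" by (simp add: GA_def)
    then show "\<exists>M\<in>SL2 A. mob M p = q"
    proof
      assume "\<exists>M\<in>SL2 A. g = mob M"
      then show ?thesis using g by auto
    next
      assume "\<exists>ps. 2 \<le> length ps \<and> distinct ps \<and> set ps \<subseteq> PA A \<and>
         (\<forall>i<length ps. \<exists>M\<in>SL2 A.
            \<forall>x\<in>arc (ps ! i) (ps ! (Suc i mod length ps)). g x = mob M x)"
      then obtain ps where ps: "2 \<le> length ps" "distinct ps"
        "\<forall>i<length ps. \<exists>M\<in>SL2 A. \<forall>x\<in>arc (ps ! i) (ps ! (Suc i mod length ps)). g x = mob M x"
        by blast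
      obtain i where i: "i < length ps" "Fin x \<in> arc (ps ! i) (ps ! (Suc i mod length ps))"
        using cover[OF ps(2) ps(1)] by blast
      obtain M where "M \<in> SL2 A" "\<forall>z\<in>arc (ps ! i) (ps ! (Suc i mod length ps)). g z = mob M z"
        using ps(3) i(1) by blast
      then show ?thesis using i(2) g p by metis
    qed
  qed
  show ?thesis using part1 part2 by blast
qed

end
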